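(* Assume $\mathfrak{d}=\omega_1$, and let $\langle f_\alpha:\alpha<\omega_1\rangle$ be functions in ${}^\omega\omega$ with $f_\alpha<^*f_\beta$ whenever $\alpha<\beta$ and such that every $g\in{}^\omega\omega$ satisfies $g<^*f_\alpha$ for some $\alpha$. Let $\{P_i:i<\omega\}$ be a partition of $\omega$ into infinite sets, $Z_\alpha=\{n:\exists i\,(n\in P_i\text{ and }n>f_\alpha(i))\}$, and let $X$ be the space on $(\omega\times\omega_1)\cup\{\infty\}$ with points of $\omega\times\omega_1$ isolated and a local subbase at $\infty$ consisting of the sets $X\setminus(P_i\times\omega_1)$ ($i<\omega$) and $X\setminus(Z_\alpha\times\alpha)$ ($\alpha<\omega_1$). Then $X$ is not $U$-selective for any ultrafilter $U$ on $\omega$ which is not a $P$-point.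
   Context: $f<^*g$ means $f(n)<g(n)$ for all but finitely many $n$. $\mathcal{F}(X)$ is the set of nonempty closed subsets of $X$; $\varphi:Y\rightarrow\mathcal{F}(X)$ is lower semicontinuous if for every open $W\subseteq X$, $\{y:\varphi(y)\cap W\neq\emptyset\}$ is open in $Y$. $X$ is $Y$-selective if every lower semicontinuous $\varphi:Y\rightarrow\mathcal{F}(X)$ has a continuous selection. For a filter $U$ on $\omega$, $Y_U$ is the space on $\omega\cup\{\infty\}$ with points of $\omega$ isolated and neighborhoods of $\infty$ the sets $A\cup\{\infty\}$, $A\in U$; $U$-selective means $Y_U$-selective. An ultrafilter $U$ on $\omega$ is a $P$-point if every function $\omega\rightarrow\omega$ is either constant or finite-to-one on some set in $U$. *)

theory Defs
  imports "HOL-Analysis.Analysis"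
begin

definition less_star :: "(nat \<Rightarrow> nat) \<Rightarrow> (nat \<Rightarrow> nat) \<Rightarrow> bool" where
  "less_star f g \<longleftrightarrow> finite {n. \<not> f n < g n}"

definition le_star :: "(nat \<Rightarrow> nat) \<Rightarrow> (nat \<Rightarrow> nat) \<Rightarrow> bool" where
  "le_star f g \<longleftrightarrow> finite {n. \<not> f n \<le> g n}"

definition dominating :: "(nat \<Rightarrow> nat) set \<Rightarrow> bool" where
  "dominating D \<longleftrightarrow> (\<forall>g. \<exists>f\<in>D. le_star g f)"

text \<open>A relation r on the type 'a is (an isomorphic copy of) omega_1:
  a well-order on all of 'a, uncountable, with all proper initial segments countable.\<close>
definition is_omega1 :: "('a \<times> 'a) set \<Rightarrow> bool" where
  "is_omega1 r \<longleftrightarrow> Well_order r \<and> Field r = UNIV \<and> \<not> countable (UNIV :: 'a set)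
     \<and> (\<forall>a. countable (Order_Relation.underS r a))"

text \<open>d = omega_1, with omega_1 represented by the type 'a (well-ordered by r):
  no countable family is dominating, and some family indexed by omega_1 is dominating.\<close>
definition dominating_number_is_omega1 :: "'a itself \<Rightarrow> bool" where
  "dominating_number_is_omega1 _ \<longleftrightarrow>
     (\<forall>D. dominating D \<longrightarrow> \<not> countable D) \<and> (\<exists>e :: 'a \<Rightarrow> nat \<Rightarrow> nat. dominating (range e))"

definition is_filter :: "nat set set \<Rightarrow> bool" where
  "is_filter U \<longleftrightarrow> UNIV \<in> U \<and> {} \<notin> U \<and> (\<forall>A B. A \<in> U \<longrightarrow> A \<subseteq> B \<longrightarrow> B \<in> U)
     \<and> (\<forall>A B. A \<in> U \<longrightarrow> B \<in> U \<longrightarrow> A \<inter> B \<in> U)"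

definition is_ultrafilter :: "nat set set \<Rightarrow> bool" where
  "is_ultrafilter U \<longleftrightarrow> is_filter U \<and> (\<forall>A. A \<in> U \<or> - A \<in> U)"

definition P_point :: "nat set set \<Rightarrow> bool" where
  "P_point U \<longleftrightarrow> is_ultrafilter U \<and>
     (\<forall>h :: nat \<Rightarrow> nat. \<exists>A\<in>U. (\<exists>c. \<forall>n\<in>A. h n = c) \<or> (\<forall>m. finite {n\<in>A. h n = m}))"

text \<open>The space Y_U on omega \<union> {\<infinity>}; None plays the role of \<infinity>.\<close>
definition Y_space :: "nat set set \<Rightarrow> nat option topology" where
  "Y_space U = topology (\<lambda>V. None \<in> V \<longrightarrow> {n. Some n \<in> V} \<in> U)"

definition lsc :: "'b topology \<Rightarrow> 'c topology \<Rightarrow> ('b \<Rightarrow> 'c set) \<Rightarrow> bool" where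
  "lsc Y X \<phi> \<longleftrightarrow> (\<forall>y\<in>topspace Y. \<phi> y \<noteq> {} \<and> closedin X (\<phi> y))
     \<and> (\<forall>W. openin X W \<longrightarrow> openin Y {y\<in>topspace Y. \<phi> y \<inter> W \<noteq> {}})"

definition selective :: "'c topology \<Rightarrow> 'b topology \<Rightarrow> bool" where
  "selective X Y \<longleftrightarrow> (\<forall>\<phi>. lsc Y X \<phi> \<longrightarrow>
     (\<exists>s. continuous_map Y X s \<and> (\<forall>y\<in>topspace Y. s y \<in> \<phi> y)))"

definition U_selective :: "'c topology \<Rightarrow> nat set set \<Rightarrow> bool" where
  "U_selective X U \<longleftrightarrow> selective X (Y_space U)"

definition Zset :: "(nat \<Rightarrow> nat set) \<Rightarrow> (nat \<Rightarrow> nat) \<Rightarrow> nat set" where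
  "Zset P g = {n. \<exists>i. n \<in> P i \<and> n > g i}"

text \<open>The space X on (omega \<times> omega_1) \<union> {\<infinity>} (None = \<infinity>): generated by the subbase consisting of
  all singletons of points of omega \<times> omega_1 together with X - (P_i \<times> omega_1) and
  X - (Z_alpha \<times> alpha).\<close>
definition X_space :: "('a \<times> 'a) set \<Rightarrow> (nat \<Rightarrow> nat set) \<Rightarrow> ('a \<Rightarrow> nat \<Rightarrow> nat)
    \<Rightarrow> (nat \<times> 'a) option topology" where
  "X_space r P f = topology_generated_by
     ((\<lambda>p. {Some p}) ` UNIV
      \<union> (\<lambda>i. UNIV - Some ` (P i \<times> UNIV)) ` UNIV
      \<union> (\<lambda>\<alpha>. UNIV - Some ` (Zset P (f \<alpha>) \<times> Order_Relation.underS r \<alpha>)) ` UNIV)"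

end

theory Submission
  imports Defs
begin

lemma Y_open:
  assumes "is_filter U"
  shows "openin (Y_space U) V \<longleftrightarrow> (None \<in> V \<longrightarrow> {n. Some n \<in> V} \<in> U)"
proof -
  have "istopology (\<lambda>V. None \<in> V \<longrightarrow> {n. Some n \<in> V} \<in> U)"
    unfolding istopology_def
  proof (intro conjI allI impI)
    fix S T :: "nat option set"
    assume a: "None \<in> S \<longrightarrow> {n. Some n \<in> S} \<in> U" "None \<in> T \<longrightarrow> {n. Some n \<in> T} \<in> U"
      and "None \<in> S \<inter> T"
    then have "{n. Some n \<in> S} \<inter> {n. Some n \<in> T} \<in> U" using assms unfolding is_filter_def by auto
    moreover have "{n. Some n \<in> S} \<inter> {n. Some n \<in> T} = {n. Some n \<in> S \<inter> T}" by auto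
    ultimately show "{n. Some n \<in> S \<inter> T} \<in> U" by simp
  next
    fix K :: "nat option set set"
    assume a: "\<forall>S\<in>K. None \<in> S \<longrightarrow> {n. Some n \<in> S} \<in> U" and "None \<in> \<Union>K"
    then obtain S where "S \<in> K" "None \<in> S" by auto
    then have "{n. Some n \<in> S} \<in> U" using a by auto
    moreover have "{n. Some n \<in> S} \<subseteq> {n. Some n \<in> \<Union>K}" using \<open>S \<in> K\<close> by auto
    ultimately show "{n. Some n \<in> \<Union>K} \<in> U" using assms unfolding is_filter_def by blast
  qed
  then show ?thesis unfolding Y_space_def by (simp add: topology_inverse')
qed

lemma Y_topspace:
  assumes "is_filter U"
  shows "topspace (Y_space U) = UNIV"
proof -
  have "openin (Y_space U) UNIV" using assms by (simp add: Y_open is_filter_def)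
  then show ?thesis using openin_subset by blast
qed

lemma X_nbhd:
  assumes P_disj: "\<And>i j. i \<noteq> j \<Longrightarrow> P i \<inter> P j = {}"
    and "openin (X_space r P f) W"
  shows "None \<in> W \<longrightarrow> (\<exists>F G. finite F \<and> finite G \<and>
     (\<forall>i k \<beta>. i \<notin> F \<longrightarrow> k \<in> P i \<longrightarrow> (\<forall>\<alpha>\<in>G. \<beta> \<notin> Order_Relation.underS r \<alpha>) \<longrightarrow> Some (k, \<beta>) \<in> W))"
proof -
  from assms(2) have "generate_topology_on
     ((\<lambda>p. {Some p}) ` UNIV
      \<union> (\<lambda>i. UNIV - Some ` (P i \<times> UNIV)) ` UNIV
      \<union> (\<lambda>\<alpha>. UNIV - Some ` (Zset P (f \<alpha>) \<times> Order_Relation.underS r \<alpha>)) ` UNIV) W"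
    unfolding X_space_def openin_topology_generated_by_iff .
  then show ?thesis
  proof (induction rule: generate_topology_on.induct)
    case Empty
    then show ?case by simp
  next
    case (Int a b)
    show ?case
    proof
      assume "None \<in> a \<inter> b"
      then obtain F1 G1 F2 G2 where "finite F1" "finite G1" "finite F2" "finite G2"
        and h1: "\<forall>i k \<beta>. i \<notin> F1 \<longrightarrow> k \<in> P i \<longrightarrow> (\<forall>\<alpha>\<in>G1. \<beta> \<notin> Order_Relation.underS r \<alpha>) \<longrightarrow> Some (k, \<beta>) \<in> a"
        and h2: "\<forall>i k \<beta>. i \<notin> F2 \<longrightarrow> k \<in> P i \<longrightarrow> (\<forall>\<alpha>\<in>G2. \<beta> \<notin> Order_Relation.underS r \<alpha>) \<longrightarrow> Some (k, \<beta>) \<in> b"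
        using Int.IH by blast
      show "\<exists>F G. finite F \<and> finite G \<and>
     (\<forall>i k \<beta>. i \<notin> F \<longrightarrow> k \<in> P i \<longrightarrow> (\<forall>\<alpha>\<in>G. \<beta> \<notin> Order_Relation.underS r \<alpha>) \<longrightarrow> Some (k, \<beta>) \<in> a \<inter> b)"
        apply (rule exI[of _ "F1 \<union> F2"], rule exI[of _ "G1 \<union> G2"])
        using \<open>finite F1\<close> \<open>finite G1\<close> \<open>finite F2\<close> \<open>finite G2\<close> h1 h2 by auto
    qed
  next
    case (UN K)
    show ?case
    proof
      assume "None \<in> \<Union>K"
      then obtain k where kK: "k \<in> K" and kN: "None \<in> k" by blast
      have IH: "None \<in> k \<longrightarrow> (\<exists>F G. finite F \<and> finite G \<and>
     (\<forall>i ka \<beta>. i \<notin> F \<longrightarrow> ka \<in> P i \<longrightarrow> (\<forall>\<alpha>\<in>G. \<beta> \<notin> Order_Relation.underS r \<alpha>) \<longrightarrow> Some (ka, \<beta>) \<in> k))"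
        using UN.IH[OF kK] .
      obtain F G where FG: "finite F" "finite G"
        and h: "\<forall>i ka \<beta>. i \<notin> F \<longrightarrow> ka \<in> P i \<longrightarrow> (\<forall>\<alpha>\<in>G. \<beta> \<notin> Order_Relation.underS r \<alpha>) \<longrightarrow> Some (ka, \<beta>) \<in> k"
        using mp[OF IH kN] by (elim exE conjE)
      have h2: "\<forall>i ka \<beta>. i \<notin> F \<longrightarrow> ka \<in> P i \<longrightarrow> (\<forall>\<alpha>\<in>G. \<beta> \<notin> Order_Relation.underS r \<alpha>) \<longrightarrow> Some (ka, \<beta>) \<in> \<Union>K"
        using h kK by blast
      show "\<exists>F G. finite F \<and> finite G \<and>
     (\<forall>i ka \<beta>. i \<notin> F \<longrightarrow> ka \<in> P i \<longrightarrow> (\<forall>\<alpha>\<in>G. \<beta> \<notin> Order_Relation.underS r \<alpha>) \<longrightarrow> Some (ka, \<beta>) \<in> \<Union>K)"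
        using FG h2 by blast
    qed
  next
    case (Basis s)
    then consider (a) p where "s = {Some p}"
      | (b) j where "s = UNIV - Some ` (P j \<times> UNIV)"
      | (c) \<gamma> where "s = UNIV - Some ` (Zset P (f \<gamma>) \<times> Order_Relation.underS r \<gamma>)"
      by fast
    then show ?case
    proof cases
      case a then show ?thesis by simp
    next
      case b
      have H: "Some (k, \<beta>) \<in> s" if "i \<notin> {j}" "k \<in> P i" for i k \<beta>
      proof -
        have "k \<notin> P j" using P_disj[of i j] that by auto
        then show ?thesis unfolding b by auto
      qed
      show ?thesis
        apply (rule impI, rule exI[of _ "{j}"], rule exI[of _ "{}"])
        using H by simp
    next
      case c
      have H: "Some (k, \<beta>) \<in> s" if "\<forall>\<alpha>\<in>{\<gamma>}. \<beta> \<notin> Order_Relation.underS r \<alpha>" for k \<beta>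
        using that unfolding c by auto
      show ?thesis
        apply (rule impI, rule exI[of _ "{}"], rule exI[of _ "{\<gamma>}"])
        using H by simp
    qed
  qed
qed

lemma X_topspace: "topspace (X_space r P f) = UNIV"
  unfolding X_space_def topology_generated_by_topspace
proof -
  have "None \<in> UNIV - Some ` (P 0 \<times> UNIV)" by auto
  then show "\<Union> ((\<lambda>p. {Some p}) ` UNIV
      \<union> (\<lambda>i. UNIV - Some ` (P i \<times> UNIV)) ` UNIV
      \<union> (\<lambda>\<alpha>. UNIV - Some ` (Zset P (f \<alpha>) \<times> Order_Relation.underS r \<alpha>)) ` UNIV) = UNIV"
    by (auto intro!: exI[of _ "UNIV - Some ` (P 0 \<times> UNIV)"])
qed

lemma X_open_basis:
  assumes "s \<in> (\<lambda>p. {Some p}) ` UNIV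
      \<union> (\<lambda>i. UNIV - Some ` (P i \<times> UNIV)) ` UNIV
      \<union> (\<lambda>\<alpha>. UNIV - Some ` (Zset P (f \<alpha>) \<times> Order_Relation.underS r \<alpha>)) ` UNIV"
  shows "openin (X_space r P f) s"
  unfolding X_space_def openin_topology_generated_by_iff
  using assms by (rule generate_topology_on.Basis)

lemma X_closed:
  assumes "S \<subseteq> Some ` (P j \<times> UNIV)"
  shows "closedin (X_space r P f) S"
proof -
  let ?B = "UNIV - Some ` (P j \<times> UNIV)"
  have o1: "openin (X_space r P f) ?B" by (rule X_open_basis) auto
  have o2: "openin (X_space r P f) (\<Union>p\<in>{p. Some p \<notin> S}. {Some p})"
    by (rule openin_Union) (auto intro: X_open_basis)
  have "UNIV - S = ?B \<union> (\<Union>p\<in>{p. Some p \<notin> S}. {Some p})"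
    using assms by auto
  then have "openin (X_space r P f) (UNIV - S)" using o1 o2 by auto
  then show ?thesis unfolding closedin_def X_topspace by simp
qed

lemma X_closed_None: "closedin (X_space r P f) {None}"
proof -
  have "openin (X_space r P f) (\<Union>p\<in>UNIV. {Some p})"
    by (rule openin_Union) (auto intro: X_open_basis)
  moreover have "(\<Union>p\<in>UNIV. {Some p}) = UNIV - {None}" by auto
  ultimately have "openin (X_space r P f) (UNIV - {None})" by metis
  then show ?thesis unfolding closedin_def X_topspace by simp
qed

lemma omega1_bound:
  assumes "is_omega1 r" "countable B"
  shows "\<exists>\<alpha>. \<forall>\<beta>\<in>B. \<beta> \<in> Order_Relation.underS r \<alpha>"
proof -
  have c: "countable (\<Union>\<beta>\<in>B. insert \<beta> (Order_Relation.underS r \<beta>))"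
    using assms unfolding is_omega1_def by auto
  have "\<not> countable (UNIV :: 'a set)" using assms(1) unfolding is_omega1_def by auto
  then obtain \<alpha> where a: "\<alpha> \<notin> (\<Union>\<beta>\<in>B. insert \<beta> (Order_Relation.underS r \<beta>))"
    using c by (metis UNIV_eq_I)
  have wo: "Well_order r" "Field r = UNIV" using assms(1) unfolding is_omega1_def by auto
  then have tot: "total_on UNIV r" unfolding well_order_on_def linear_order_on_def by metis
  show ?thesis
  proof (intro exI ballI)
    fix \<beta> assume "\<beta> \<in> B"
    with a have "\<alpha> \<noteq> \<beta>" "\<alpha> \<notin> Order_Relation.underS r \<beta>" by auto
    then have "(\<alpha>, \<beta>) \<notin> r" unfolding Order_Relation.underS_def by auto
    with tot \<open>\<alpha> \<noteq> \<beta>\<close> have "(\<beta>, \<alpha>) \<in> r" unfolding total_on_def by blast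
    then show "\<beta> \<in> Order_Relation.underS r \<alpha>" using \<open>\<alpha> \<noteq> \<beta>\<close> unfolding Order_Relation.underS_def by auto
  qed
qed

lemma omega1_avoid:
  assumes "is_omega1 r" "finite G"
  shows "\<exists>\<beta>. \<forall>\<alpha>\<in>G. \<beta> \<notin> Order_Relation.underS r \<alpha>"
proof -
  have c: "countable (\<Union>\<alpha>\<in>G. Order_Relation.underS r \<alpha>)"
    using assms unfolding is_omega1_def by (auto intro: countable_finite)
  have "\<not> countable (UNIV :: 'a set)" using assms(1) unfolding is_omega1_def by auto
  then show ?thesis using c by (metis UNIV_eq_I UN_I)
qed

lemma ultra_fin:
  assumes "is_ultrafilter U" "\<And>c. h -` {c} \<notin> U" "finite F"
  shows "{n. h n \<notin> F} \<in> U"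
  using assms(3)
proof induction
  case empty
  then show ?case using assms(1) unfolding is_ultrafilter_def is_filter_def by simp
next
  case (insert x F)
  have "- (h -` {x}) \<in> U" using assms(1,2) unfolding is_ultrafilter_def by blast
  then have "{n. h n \<notin> F} \<inter> - (h -` {x}) \<in> U"
    using insert.IH assms(1) unfolding is_ultrafilter_def is_filter_def by blast
  moreover have "{n. h n \<notin> F} \<inter> - (h -` {x}) = {n. h n \<notin> insert x F}" by auto
  ultimately show ?case by simp
qed

theorem mainTheorem5:
  fixes r :: "('a \<times> 'a) set" and f :: "'a \<Rightarrow> nat \<Rightarrow> nat" and P :: "nat \<Rightarrow> nat set"
  assumes omega1: "is_omega1 r"
    and d_omega1: "dominating_number_is_omega1 TYPE('a)"
    and incr: "\<And>\<alpha> \<beta>. (\<alpha>, \<beta>) \<in> r \<Longrightarrow> \<alpha> \<noteq> \<beta> \<Longrightarrow> less_star (f \<alpha>) (f \<beta>)"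
    and dom: "\<And>g. \<exists>\<alpha>. less_star g (f \<alpha>)"
    and P_inf: "\<And>i. infinite (P i)"
    and P_disj: "\<And>i j. i \<noteq> j \<Longrightarrow> P i \<inter> P j = {}"
    and P_cover: "(\<Union>i. P i) = UNIV"
  shows "\<forall>U. is_ultrafilter U \<and> \<not> P_point U \<longrightarrow> \<not> U_selective (X_space r P f) U"
proof (intro allI impI notI)
  fix U assume UU: "is_ultrafilter U \<and> \<not> P_point U" and sel: "U_selective (X_space r P f) U"
  have ult: "is_ultrafilter U" and filt: "is_filter U" using UU unfolding is_ultrafilter_def by auto
  from UU obtain h :: "nat \<Rightarrow> nat" where
    hA: "\<And>A. A \<in> U \<Longrightarrow> (\<forall>c. \<exists>n\<in>A. h n \<noteq> c) \<and> (\<exists>m. infinite {n\<in>A. h n = m})"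
    unfolding P_point_def by blast
  have fib: "h -` {c} \<notin> U" for c
  proof
    assume "h -` {c} \<in> U"
    from hA[OF this] show False by auto
  qed
  define \<phi> :: "nat option \<Rightarrow> (nat \<times> 'a) option set" where
    "\<phi> y = (case y of None \<Rightarrow> {None} | Some n \<Rightarrow> Some ` ({k \<in> P (h n). n < k} \<times> UNIV))" for y
  have ex_k: "\<exists>k\<in>P i. n < k" for i n
    using P_inf[of i] by (meson finite_nat_set_iff_bounded_le not_le_imp_less)
  have "lsc (Y_space U) (X_space r P f) \<phi>"
    unfolding lsc_def
  proof (intro conjI ballI allI impI)
    fix y assume "y \<in> topspace (Y_space U)"
    show "\<phi> y \<noteq> {}" using ex_k by (cases y) (auto simp: \<phi>_def)
    show "closedin (X_space r P f) (\<phi> y)"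
    proof (cases y)
      case None then show ?thesis by (simp add: \<phi>_def X_closed_None)
    next
      case (Some n) then show ?thesis
        by (simp add: \<phi>_def) (rule X_closed, auto)
    qed
  next
    fix W assume W: "openin (X_space r P f) W"
    show "openin (Y_space U) {y \<in> topspace (Y_space U). \<phi> y \<inter> W \<noteq> {}}"
      unfolding Y_open[OF filt] Y_topspace[OF filt]
    proof
      assume "None \<in> {y \<in> UNIV. \<phi> y \<inter> W \<noteq> {}}"
      then have "None \<in> W" by (simp add: \<phi>_def)
      then obtain F G where "finite F" "finite G" and FG:
        "\<And>i k \<beta>. i \<notin> F \<Longrightarrow> k \<in> P i \<Longrightarrow> (\<forall>\<alpha>\<in>G. \<beta> \<notin> Order_Relation.underS r \<alpha>) \<Longrightarrow> Some (k, \<beta>) \<in> W"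
        using X_nbhd[OF P_disj W] by blast
      obtain \<beta> where \<beta>: "\<forall>\<alpha>\<in>G. \<beta> \<notin> Order_Relation.underS r \<alpha>"
        using omega1_avoid[OF omega1 \<open>finite G\<close>] by blast
      have "{n. h n \<notin> F} \<subseteq> {n. Some n \<in> {y \<in> UNIV. \<phi> y \<inter> W \<noteq> {}}}"
      proof (rule subsetI, simp only: mem_Collect_eq, rule conjI[OF UNIV_I], rule notI)
        fix n assume "h n \<notin> F"
        obtain k where "k \<in> P (h n)" "n < k" using ex_k by blast
        then have "Some (k, \<beta>) \<in> \<phi> (Some n) \<inter> W"
          using FG[OF \<open>h n \<notin> F\<close> \<open>k \<in> P (h n)\<close> \<beta>] by (auto simp: \<phi>_def)
        then show "\<phi> (Some n) \<inter> W = {} \<Longrightarrow> False" by blast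
      qed
      moreover have "{n. h n \<notin> F} \<in> U" using ultra_fin[OF ult fib \<open>finite F\<close>] .
      ultimately show "{n. Some n \<in> {y \<in> UNIV. \<phi> y \<inter> W \<noteq> {}}} \<in> U"
        using filt unfolding is_filter_def by blast
    qed
  qed
  then obtain s where cont: "continuous_map (Y_space U) (X_space r P f) s"
    and sin: "\<forall>y\<in>topspace (Y_space U). s y \<in> \<phi> y"
    using sel unfolding U_selective_def selective_def by blast
  have "s None \<in> \<phi> None" using sin by (simp add: Y_topspace[OF filt])
  then have sN: "s None = None" by (simp add: \<phi>_def)
  have "\<forall>n. \<exists>k \<beta>. s (Some n) = Some (k, \<beta>) \<and> k \<in> P (h n) \<and> n < k"
  proof
    fix n
    have "s (Some n) \<in> \<phi> (Some n)" using sin by (simp add: Y_topspace[OF filt])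
    then show "\<exists>k \<beta>. s (Some n) = Some (k, \<beta>) \<and> k \<in> P (h n) \<and> n < k"
      by (auto simp: \<phi>_def)
  qed
  then obtain kk bb where kb: "\<And>n. s (Some n) = Some (kk n, bb n)" "\<And>n. kk n \<in> P (h n)" "\<And>n. n < kk n"
    by metis
  obtain \<alpha> where a: "\<And>n. bb n \<in> Order_Relation.underS r \<alpha>"
    using omega1_bound[OF omega1, of "range bb"] by auto
  let ?V = "UNIV - Some ` (Zset P (f \<alpha>) \<times> Order_Relation.underS r \<alpha>)"
  have "openin (X_space r P f) ?V" by (rule X_open_basis) auto
  then have "openin (Y_space U) {y \<in> topspace (Y_space U). s y \<in> ?V}"
    using cont by (rule openin_continuous_map_preimage[rotated])
  moreover have "None \<in> {y \<in> topspace (Y_space U). s y \<in> ?V}"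
    using sN by (simp add: Y_topspace[OF filt])
  ultimately have AU: "{n. Some n \<in> {y \<in> topspace (Y_space U). s y \<in> ?V}} \<in> U"
    unfolding Y_open[OF filt] by blast
  let ?A = "{n. Some n \<in> {y \<in> topspace (Y_space U). s y \<in> ?V}}"
  have Asub: "n < f \<alpha> (h n)" if "n \<in> ?A" for n
  proof -
    from that have "(kk n, bb n) \<notin> Zset P (f \<alpha>) \<times> Order_Relation.underS r \<alpha>"
      using kb(1) by auto
    then have "kk n \<notin> Zset P (f \<alpha>)" using a by auto
    then have "kk n \<le> f \<alpha> (h n)" using kb(2) unfolding Zset_def by force
    then show ?thesis using kb(3)[of n] by simp
  qed
  obtain m where "infinite {n \<in> ?A. h n = m}" using hA[OF AU] by blast
  moreover have "{n \<in> ?A. h n = m} \<subseteq> {..< f \<alpha> m}" using Asub by auto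
  ultimately show False using finite_subset by blast
qed

end
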